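(* Let $\epsilon\in(0,1]$ and $\mathcal{A}(\epsilon)=\{0,\epsilon,2\epsilon,\dots,\lfloor 1/\epsilon\rfloor\epsilon,1\}$. Let $f(p)=R(p,\alpha p,\hat{\mathcal{M}}^\ast(p,\alpha p))$ for $p\in[0,1]$, and assume $f$ is $\beta$-Lipschitz on $[0,1]$. Let $p_{\mathrm{DS}}^\ast$ be a maximizer of $f$ over $\mathcal{A}(\epsilon)$ and $q_{\mathrm{DS}}^\ast=\alpha p_{\mathrm{DS}}^\ast$. Let $(p^\ast,q^\ast,\mathcal{M}^\ast)$ be an optimal solution of Problem 1 (assumed to exist). Then $$R(p_{\mathrm{DS}}^\ast,q_{\mathrm{DS}}^\ast,\hat{\mathcal{M}}^\ast(p_{\mathrm{DS}}^\ast,q_{\mathrm{DS}}^\ast))\ \ge\ \Big(1-\frac1e\Big)R(p^\ast,q^\ast,\mathcal{M}^\ast)-\beta\epsilon.$$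
   Context: Let $\mathcal{G}=(\mathcal{U},\mathcal{E})$ be a finite directed graph without self-loops, $\mathcal{U}=\{1,\dots,U\}$. For $u,v\in\mathcal{U}$, $D(u,v;\mathcal{G})$ denotes the number of edges of a shortest directed path from $u$ to $v$ in $\mathcal{G}$, with $D(u,v;\mathcal{G})=+\infty$ if there is no such path. For an integer $d\ge0$, the $d$-visible set of $u$ is $\mathcal{V}(u,d;\mathcal{G})=\{v\in\mathcal{U}: D(v,u;\mathcal{G})\le d\}$. Fix an integer social visibility threshold $\tau\ge1$. Let $\mathcal{R}\subseteq\mathcal{U}$ (requesters) and $\mathcal{S}\subseteq\mathcal{U}$ (suppliers) be disjoint. Each requester $u\in\mathcal{R}$ has a valuation $p_u\in[0,1]$ and each supplier $u\in\mathcal{S}$ has a valuation $q_u\in[0,1]$. Let $b$ be a positive integer (budget) and $\alpha\in(0,1)$. For $p\in[0,1]$ let $\widetilde{R}(p)=\{u\in\mathcal{R}: p_u\ge p\}$ and for $q\in[0,1]$ let $\widetilde{S}(q)=\{u\in\mathcal{S}: q_u\le q\}$. For $\mathcal{M}\subseteq\mathcal{S}$ let $\widetilde{G}(p,\mathcal{M})$ be the graph obtained from $\mathcal{G}$ by adding a directed edge from every $s\in\mathcal{M}$ to every $r\in\widetilde{R}(p)$. For $u\in\widetilde{R}(p)$ let $I_u(p,\mathcal{M})=|\mathcal{V}(u,\tau;\widetilde{G}(p,\mathcal{M}))\setminus\mathcal{V}(u,\tau;\mathcal{G})|$, and $I(p,\mathcal{M})=\sum_{u\in\widetilde{R}(p)}I_u(p,\mathcal{M})$.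 The revenue is $R(p,q,\mathcal{M})=p\,I(p,\mathcal{M})-q\,I(p,\mathcal{M})$. Problem 1: maximize $R(p,q,\mathcal{M})$ over $p,q\in[0,1]$ and $\mathcal{M}$ subject to $q=\alpha p$, $\mathcal{M}\subseteq\widetilde{S}(q)$, $|\mathcal{M}|\le b$. The greedy procedure \texttt{OptSupplierSet}$(p,q)$: start with $\mathcal{M}=\emptyset$; for $t=1,\dots,b$, pick $u^\ast\in\widetilde{S}(q)$ maximizing $R(p,q,\mathcal{M}\cup\{u\})-R(p,q,\mathcal{M})$ (ties broken arbitrarily) and set $\mathcal{M}\leftarrow\mathcal{M}\cup\{u^\ast\}$; output $\hat{\mathcal{M}}^\ast(p,q)=\mathcal{M}$. *)

theory Defs
  imports "HOL-Analysis.Analysis" "HOL-Library.Extended_Nat"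
begin

definition sp_dist :: "(nat \<times> nat) set \<Rightarrow> nat \<Rightarrow> nat \<Rightarrow> enat" where
  "sp_dist E u v = (if \<exists>n. (u, v) \<in> E ^^ n then enat (LEAST n. (u, v) \<in> E ^^ n) else \<infinity>)"

definition visible :: "nat \<Rightarrow> (nat \<times> nat) set \<Rightarrow> nat \<Rightarrow> nat \<Rightarrow> nat set" where
  "visible U E u d = {v \<in> {1..U}. sp_dist E v u \<le> enat d}"

definition Rtil :: "nat set \<Rightarrow> (nat \<Rightarrow> real) \<Rightarrow> real \<Rightarrow> nat set" where
  "Rtil Rset pv p = {u \<in> Rset. pv u \<ge> p}"

definition Stil :: "nat set \<Rightarrow> (nat \<Rightarrow> real) \<Rightarrow> real \<Rightarrow> nat set" where
  "Stil Sset qv q = {u \<in> Sset. qv u \<le> q}"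

definition aug_graph :: "(nat \<times> nat) set \<Rightarrow> nat set \<Rightarrow> (nat \<Rightarrow> real) \<Rightarrow> real \<Rightarrow> nat set \<Rightarrow> (nat \<times> nat) set" where
  "aug_graph E Rset pv p M = E \<union> (M \<times> Rtil Rset pv p)"

definition infl_u :: "nat \<Rightarrow> (nat \<times> nat) set \<Rightarrow> nat \<Rightarrow> nat set \<Rightarrow> (nat \<Rightarrow> real) \<Rightarrow> real \<Rightarrow> nat set \<Rightarrow> nat \<Rightarrow> nat" where
  "infl_u U E \<tau> Rset pv p M u =
     card (visible U (aug_graph E Rset pv p M) u \<tau> - visible U E u \<tau>)"

definition infl :: "nat \<Rightarrow> (nat \<times> nat) set \<Rightarrow> nat \<Rightarrow> nat set \<Rightarrow> (nat \<Rightarrow> real) \<Rightarrow> real \<Rightarrow> nat set \<Rightarrow> nat" where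
  "infl U E \<tau> Rset pv p M = (\<Sum>u\<in>Rtil Rset pv p. infl_u U E \<tau> Rset pv p M u)"

definition revenue :: "nat \<Rightarrow> (nat \<times> nat) set \<Rightarrow> nat \<Rightarrow> nat set \<Rightarrow> (nat \<Rightarrow> real) \<Rightarrow> real \<Rightarrow> real \<Rightarrow> nat set \<Rightarrow> real" where
  "revenue U E \<tau> Rset pv p q M =
     p * real (infl U E \<tau> Rset pv p M) - q * real (infl U E \<tau> Rset pv p M)"

(* M is a possible output of the greedy procedure OptSupplierSet(p,q) for some tie-breaking:
   there is a sequence us of b picks, each in Stil(q) and maximizing the marginal revenue
   w.r.t. the set of previous picks; the output is the set of picks.
   If Stil(q) is empty, nothing can be picked and the output is the empty set. *)
definition greedy_output :: "nat \<Rightarrow> (nat \<times> nat) set \<Rightarrow> nat \<Rightarrow> nat set \<Rightarrow> nat set \<Rightarrow>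
    (nat \<Rightarrow> real) \<Rightarrow> (nat \<Rightarrow> real) \<Rightarrow> nat \<Rightarrow> real \<Rightarrow> real \<Rightarrow> nat set \<Rightarrow> bool" where
  "greedy_output U E \<tau> Rset Sset pv qv b p q M \<longleftrightarrow>
     (Stil Sset qv q = {} \<and> M = {}) \<or>
     (\<exists>us :: nat list. length us = b \<and> M = set us \<and>
        (\<forall>t<b. us ! t \<in> Stil Sset qv q \<and>
           (\<forall>u\<in>Stil Sset qv q.
              revenue U E \<tau> Rset pv p q (insert u (set (take t us))) - revenue U E \<tau> Rset pv p q (set (take t us))
              \<le> revenue U E \<tau> Rset pv p q (insert (us ! t) (set (take t us))) - revenue U E \<tau> Rset pv p q (set (take t us)))))"

definition feasible1 :: "nat set \<Rightarrow> (nat \<Rightarrow> real) \<Rightarrow> nat \<Rightarrow> real \<Rightarrow> real \<Rightarrow> real \<Rightarrow> nat set \<Rightarrow> bool" where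
  "feasible1 Sset qv b \<alpha> p q M \<longleftrightarrow>
     p \<in> {0..1} \<and> q \<in> {0..1} \<and> q = \<alpha> * p \<and> M \<subseteq> Stil Sset qv q \<and> card M \<le> b"

definition grid :: "real \<Rightarrow> real set" where
  "grid \<epsilon> = {real k * \<epsilon> | k. k \<le> nat \<lfloor>1 / \<epsilon>\<rfloor>} \<union> {1}"

end

theory Submission
  imports Defs
begin

lemma relpow_mono_pt: fixes A B :: "('a \<times> 'a) set" shows "A \<subseteq> B \<Longrightarrow> (x,y) \<in> A ^^ n \<Longrightarrow> (x,y) \<in> B ^^ n"
proof (induction n arbitrary: y)
  case 0 then show ?case by simp
next
  case (Suc n)
  from Suc.prems(2) obtain w where "(x,w) \<in> A ^^ n" "(w,y) \<in> A" by (auto elim: relpow_Suc_E)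
  then show ?case using Suc.IH Suc.prems(1) by (meson relpow_Suc_I subsetD)
qed

lemma relpow_mono': fixes A B :: "('a \<times> 'a) set" shows "A \<subseteq> B \<Longrightarrow> A ^^ n \<subseteq> B ^^ n"
  by (rule subrelI) (rule relpow_mono_pt)

lemma sp_le: "sp_dist E v u \<le> enat d \<longleftrightarrow> (\<exists>n\<le>d. (v,u) \<in> E ^^ n)"
proof
  assume "sp_dist E v u \<le> enat d"
  then have ex: "\<exists>n. (v, u) \<in> E ^^ n" and le: "(LEAST n. (v, u) \<in> E ^^ n) \<le> d"
    by (auto simp: sp_dist_def split: if_splits)
  then show "\<exists>n\<le>d. (v,u) \<in> E ^^ n" by (meson LeastI_ex)
next
  assume "\<exists>n\<le>d. (v,u) \<in> E ^^ n"
  then obtain n where "n \<le> d" "(v,u) \<in> E ^^ n" by auto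
  then show "sp_dist E v u \<le> enat d"
    by (auto simp: sp_dist_def intro: le_trans[OF Least_le])
qed

lemma vis_mono: "A \<subseteq> B \<Longrightarrow> visible U A u d \<subseteq> visible U B u d"
  unfolding visible_def sp_le using relpow_mono' by blast

lemma path_decomp:
  "(v,u) \<in> (E \<union> M \<times> R) ^^ n \<Longrightarrow> (v,u) \<in> E ^^ n \<or>
     (\<exists>s\<in>M. \<exists>r\<in>R. \<exists>a c. a + 1 + c \<le> n \<and> (v,s) \<in> E ^^ a \<and> (r,u) \<in> E ^^ c)"
proof (induction n arbitrary: u)
  case 0
  then show ?case by auto
next
  case (Suc n)
  from Suc.prems obtain w where vw: "(v,w) \<in> (E \<union> M \<times> R) ^^ n" and wu: "(w,u) \<in> E \<union> M \<times> R"
    by (auto elim: relpow_Suc_E)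
  from Suc.IH[OF vw] show ?case
  proof
    assume h: "(v,w) \<in> E ^^ n"
    show ?case
    proof (cases "(w,u) \<in> E")
      case True then show ?thesis using h by (blast intro: relpow_Suc_I)
    next
      case False then have "w \<in> M" "u \<in> R" using wu by auto
      then show ?thesis using h by (intro disjI2 bexI[of _ w] bexI[of _ u] exI[of _ n] exI[of _ 0]) auto
    qed
  next
    assume "\<exists>s\<in>M. \<exists>r\<in>R. \<exists>a c. a + 1 + c \<le> n \<and> (v,s) \<in> E ^^ a \<and> (r,w) \<in> E ^^ c"
    then obtain s r a c where h: "s\<in>M" "r\<in>R" "a + 1 + c \<le> n" "(v,s) \<in> E ^^ a" "(r,w) \<in> E ^^ c"
      by blast
    show ?case
    proof (cases "(w,u) \<in> E")
      case True then show ?thesis using h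
        by (intro disjI2 bexI[of _ s] bexI[of _ r] exI[of _ a] exI[of _ "Suc c"]) (auto intro: relpow_Suc_I)
    next
      case False then have "u \<in> R" using wu by auto
      then show ?thesis using h by (intro disjI2 bexI[of _ s] bexI[of _ u] exI[of _ a] exI[of _ 0]) auto
    qed
  qed
qed

lemma vis_union:
  "visible U (E \<union> M \<times> R) u d \<subseteq> visible U E u d \<union> (\<Union>s\<in>M. visible U (E \<union> {s} \<times> R) u d)"
proof
  fix v assume "v \<in> visible U (E \<union> M \<times> R) u d"
  then obtain n where v: "v \<in> {1..U}" "n \<le> d" "(v,u) \<in> (E \<union> M \<times> R) ^^ n"
    unfolding visible_def sp_le by auto
  from path_decomp[OF v(3)] show "v \<in> visible U E u d \<union> (\<Union>s\<in>M. visible U (E \<union> {s} \<times> R) u d)"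
  proof
    assume "(v,u) \<in> E ^^ n" then show ?thesis using v unfolding visible_def sp_le by auto
  next
    assume "\<exists>s\<in>M. \<exists>r\<in>R. \<exists>a c. a + 1 + c \<le> n \<and> (v,s) \<in> E ^^ a \<and> (r,u) \<in> E ^^ c"
    then obtain s r a c where h: "s\<in>M" "r\<in>R" "a + 1 + c \<le> n" "(v,s) \<in> E ^^ a" "(r,u) \<in> E ^^ c"
      by blast
    let ?A = "E \<union> {s} \<times> R"
    have "(v,s) \<in> ?A ^^ a" using h(4) relpow_mono'[of E ?A] by blast
    then have "(v,r) \<in> ?A ^^ Suc a" using h(2) by (blast intro: relpow_Suc_I)
    moreover have "(r,u) \<in> ?A ^^ c" using h(5) relpow_mono'[of E ?A] by blast
    ultimately have "(v,u) \<in> ?A ^^ (Suc a) O ?A ^^ c" by blast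
    then have "(v,u) \<in> ?A ^^ (Suc a + c)" by (simp only: relpow_add)
    then have "v \<in> visible U ?A u d" using v h(3) unfolding visible_def sp_le
      by (intro CollectI conjI) (auto intro!: exI[of _ "Suc a + c"])
    then show ?thesis using h(1) by blast
  qed
qed

definition Nset where
  "Nset U E \<tau> Rset pv p M u = visible U (aug_graph E Rset pv p M) u \<tau> - visible U E u \<tau>"

lemma infl_u_N: "infl_u U E \<tau> Rset pv p M u = card (Nset U E \<tau> Rset pv p M u)"
  by (simp add: infl_u_def Nset_def)

lemma N_fin: "finite (Nset U E \<tau> Rset pv p M u)"
  unfolding Nset_def visible_def by (rule finite_subset[of _ "{1..U}"]) auto

lemma N_mono: "A \<subseteq> B \<Longrightarrow> Nset U E \<tau> Rset pv p A u \<subseteq> Nset U E \<tau> Rset pv p B u"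
  unfolding Nset_def aug_graph_def using vis_mono[of "E \<union> A \<times> Rtil Rset pv p" "E \<union> B \<times> Rtil Rset pv p"]
  by blast

lemma N_sub: "Nset U E \<tau> Rset pv p OPT u \<subseteq> Nset U E \<tau> Rset pv p S u \<union>
   (\<Union>z\<in>OPT. Nset U E \<tau> Rset pv p (insert z S) u - Nset U E \<tau> Rset pv p S u)"
proof
  fix v assume v: "v \<in> Nset U E \<tau> Rset pv p OPT u"
  then have v1: "v \<in> visible U (E \<union> OPT \<times> Rtil Rset pv p) u \<tau>" and v2: "v \<notin> visible U E u \<tau>"
    unfolding Nset_def aug_graph_def by auto
  from v1 vis_union[of U E OPT "Rtil Rset pv p" u \<tau>] v2
  obtain z where z: "z \<in> OPT" "v \<in> visible U (E \<union> {z} \<times> Rtil Rset pv p) u \<tau>"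
    by blast
  then have "v \<in> Nset U E \<tau> Rset pv p {z} u" using v2 unfolding Nset_def aug_graph_def by simp
  moreover have "Nset U E \<tau> Rset pv p {z} u \<subseteq> Nset U E \<tau> Rset pv p (insert z S) u"
    by (rule N_mono) simp
  ultimately have "v \<in> Nset U E \<tau> Rset pv p (insert z S) u" by (rule subsetD[rotated])
  then show "v \<in> Nset U E \<tau> Rset pv p S u \<union>
   (\<Union>z\<in>OPT. Nset U E \<tau> Rset pv p (insert z S) u - Nset U E \<tau> Rset pv p S u)"
    using z(1) by blast
qed

lemma infl_N: "real (infl U E \<tau> Rset pv p M) = (\<Sum>u\<in>Rtil Rset pv p. real (card (Nset U E \<tau> Rset pv p M u)))"
  by (simp add: infl_def infl_u_N)

lemma infl_mono: "A \<subseteq> B \<Longrightarrow> real (infl U E \<tau> Rset pv p A) \<le> real (infl U E \<tau> Rset pv p B)"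
  unfolding infl_N by (intro sum_mono) (simp add: card_mono N_fin N_mono)

lemma infl_empty: "infl U E \<tau> Rset pv p {} = 0"
  by (simp add: infl_def infl_u_def aug_graph_def)

lemma infl_sub:
  assumes "finite OPT"
  shows "real (infl U E \<tau> Rset pv p OPT) \<le> real (infl U E \<tau> Rset pv p S)
     + (\<Sum>z\<in>OPT. real (infl U E \<tau> Rset pv p (insert z S)) - real (infl U E \<tau> Rset pv p S))"
proof -
  let ?N = "Nset U E \<tau> Rset pv p"
  have pu: "real (card (?N OPT u)) \<le> real (card (?N S u)) +
     (\<Sum>z\<in>OPT. real (card (?N (insert z S) u)) - real (card (?N S u)))" for u
  proof -
    have "card (?N OPT u) \<le> card (?N S u \<union> (\<Union>z\<in>OPT. ?N (insert z S) u - ?N S u))"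
      apply (rule card_mono) apply (simp add: N_fin assms) by (rule N_sub)
    also have "\<dots> \<le> card (?N S u) + card (\<Union>z\<in>OPT. ?N (insert z S) u - ?N S u)"
      by (rule card_Un_le)
    also have "card (\<Union>z\<in>OPT. ?N (insert z S) u - ?N S u) \<le> (\<Sum>z\<in>OPT. card (?N (insert z S) u - ?N S u))"
      by (rule card_UN_le[OF assms])
    finally have "real (card (?N OPT u)) \<le> real (card (?N S u)) + (\<Sum>z\<in>OPT. real (card (?N (insert z S) u - ?N S u)))"
      by (simp flip: of_nat_sum of_nat_add)
    moreover have "real (card (?N (insert z S) u - ?N S u)) = real (card (?N (insert z S) u)) - real (card (?N S u))" for z
      by (subst card_Diff_subset) (auto simp: N_fin N_mono subset_insertI of_nat_diff card_mono)
    ultimately show ?thesis by simp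
  qed
  have "real (infl U E \<tau> Rset pv p OPT) \<le> (\<Sum>u\<in>Rtil Rset pv p. real (card (?N S u)) +
     (\<Sum>z\<in>OPT. real (card (?N (insert z S) u)) - real (card (?N S u))))"
    unfolding infl_N by (rule sum_mono) (rule pu)
  also have "\<dots> = real (infl U E \<tau> Rset pv p S)
     + (\<Sum>z\<in>OPT. real (infl U E \<tau> Rset pv p (insert z S)) - real (infl U E \<tau> Rset pv p S))"
    unfolding infl_N sum.distrib sum_subtractf
    by (subst sum.swap) (simp add: sum_distrib_left)
  finally show ?thesis .
qed

lemma greedy_bound:
  fixes G :: "nat set \<Rightarrow> real" and C OPT :: "nat set" and us :: "nat list" and b :: nat
  assumes mono: "\<And>A B. A \<subseteq> B \<Longrightarrow> G A \<le> G B"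
    and sub: "\<And>S. G OPT \<le> G S + (\<Sum>z\<in>OPT. G (insert z S) - G S)"
    and G0: "G {} = 0"
    and fin: "finite OPT" and cardO: "card OPT \<le> b" and OPTC: "OPT \<subseteq> C" and bpos: "b > 0"
    and len: "length us = b"
    and gr: "\<forall>t<b. us!t \<in> C \<and> (\<forall>u\<in>C. G (insert u (set (take t us))) - G (set (take t us))
              \<le> G (insert (us!t) (set (take t us))) - G (set (take t us)))"
  shows "G (set us) \<ge> (1 - 1 / exp 1) * G OPT"
proof -
  define S where "S t = set (take t us)" for t
  define g where "g t = G OPT - G (S t)" for t
  define \<rho> where "\<rho> = 1 - 1 / real b"
  have rho0: "0 \<le> \<rho>" using bpos by (simp add: \<rho>_def)
  have step: "g (Suc t) \<le> \<rho> * g t" if tb: "t < b" for t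
  proof -
    have SS: "S (Suc t) = insert (us!t) (S t)"
      using tb len by (simp add: S_def take_Suc_conv_app_nth)
    define \<delta> where "\<delta> = G (S (Suc t)) - G (S t)"
    have d0: "0 \<le> \<delta>" unfolding \<delta>_def SS using mono[of "S t"] by auto
    have "g t \<le> (\<Sum>z\<in>OPT. G (insert z (S t)) - G (S t))"
      using sub[of "S t"] by (simp add: g_def)
    also have "\<dots> \<le> (\<Sum>z\<in>OPT. \<delta>)"
      proof (rule sum_mono)
      fix z assume "z \<in> OPT"
      then have "z \<in> C" using OPTC by auto
      then show "G (insert z (S t)) - G (S t) \<le> \<delta>"
        using gr tb unfolding \<delta>_def SS by (simp add: S_def)
    qed
    also have "\<dots> = real (card OPT) * \<delta>" by simp
    also have "\<dots> \<le> real b * \<delta>" using cardO d0 by (intro mult_right_mono) auto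
    finally have "g t \<le> real b * (g t - g (Suc t))" by (simp add: \<delta>_def g_def)
    then show ?thesis using bpos by (simp add: \<rho>_def field_simps)
  qed
  have ind: "t \<le> b \<Longrightarrow> g t \<le> \<rho> ^ t * g 0" for t
  proof (induction t)
    case 0 then show ?case by simp
  next
    case (Suc t)
    then have "g (Suc t) \<le> \<rho> * g t" by (intro step) auto
    also have "\<dots> \<le> \<rho> * (\<rho> ^ t * g 0)" using Suc rho0 by (intro mult_left_mono) auto
    finally show ?case by simp
  qed
  have g0: "g 0 = G OPT" by (simp add: g_def S_def G0)
  have Gopt: "0 \<le> G OPT" using mono[of "{}" OPT] G0 by simp
  have "\<rho> \<le> exp (- 1 / real b)" unfolding \<rho>_def using exp_ge_add_one_self[of "- 1 / real b"] by simp
  then have "\<rho> ^ b \<le> exp (- 1 / real b) ^ b" using rho0 by (intro power_mono) auto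
  also have "\<dots> = exp (real b * (- 1 / real b))" by (rule exp_of_nat_mult[symmetric])
  also have "real b * (- 1 / real b) = - 1" using bpos by simp
  also have "exp (- 1) = 1 / exp (1::real)" by (simp add: exp_minus field_simps)
  finally have rb: "\<rho> ^ b \<le> 1 / exp 1" .
  have "g b \<le> \<rho> ^ b * G OPT" using ind[of b] g0 by simp
  also have "\<dots> \<le> 1 / exp 1 * G OPT" using rb Gopt by (intro mult_right_mono) auto
  finally have "G OPT - G (S b) \<le> 1 / exp 1 * G OPT" by (simp add: g_def)
  moreover have "S b = set us" using len by (simp add: S_def)
  ultimately show ?thesis by (simp add: algebra_simps)
qed

theorem mainTheorem6:
  fixes U :: nat and E :: "(nat \<times> nat) set" and \<tau> :: nat
    and Rset Sset :: "nat set" and pv qv :: "nat \<Rightarrow> real"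
    and b :: nat and \<alpha> \<beta> \<epsilon> :: real
    and Mhat :: "real \<Rightarrow> real \<Rightarrow> nat set"
    and pDS pstar qstar :: real and Mstar :: "nat set"
  assumes E_sub: "E \<subseteq> {1..U} \<times> {1..U}"
    and no_loops: "\<forall>u. (u, u) \<notin> E"
    and tau: "\<tau> \<ge> 1"
    and Req_sub: "Rset \<subseteq> {1..U}" and Sup_sub: "Sset \<subseteq> {1..U}"
    and disj: "Rset \<inter> Sset = {}"
    and pv_range: "\<forall>u\<in>Rset. pv u \<in> {0..1}"
    and qv_range: "\<forall>u\<in>Sset. qv u \<in> {0..1}"
    and b_pos: "b > 0"
    and alpha: "0 < \<alpha>" "\<alpha> < 1"
    and eps: "0 < \<epsilon>" "\<epsilon> \<le> 1"
    and greedy: "\<forall>p\<in>{0..1}. greedy_output U E \<tau> Rset Sset pv qv b p (\<alpha> * p) (Mhat p (\<alpha> * p))"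
    and lip: "lipschitz_on \<beta> {0..1} (\<lambda>p. revenue U E \<tau> Rset pv p (\<alpha> * p) (Mhat p (\<alpha> * p)))"
    and pDS_in: "pDS \<in> grid \<epsilon>"
    and pDS_max: "\<forall>p\<in>grid \<epsilon>. revenue U E \<tau> Rset pv p (\<alpha> * p) (Mhat p (\<alpha> * p))
                     \<le> revenue U E \<tau> Rset pv pDS (\<alpha> * pDS) (Mhat pDS (\<alpha> * pDS))"
    and opt_feas: "feasible1 Sset qv b \<alpha> pstar qstar Mstar"
    and opt: "\<forall>p q M. feasible1 Sset qv b \<alpha> p q M \<longrightarrow>
                revenue U E \<tau> Rset pv p q M \<le> revenue U E \<tau> Rset pv pstar qstar Mstar"
  shows "revenue U E \<tau> Rset pv pDS (\<alpha> * pDS) (Mhat pDS (\<alpha> * pDS))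
           \<ge> (1 - 1 / exp 1) * revenue U E \<tau> Rset pv pstar qstar Mstar - \<beta> * \<epsilon>"
proof -
  from opt_feas have ps: "pstar \<in> {0..1}" and qs: "qstar = \<alpha> * pstar"
    and Ms: "Mstar \<subseteq> Stil Sset qv qstar" and cM: "card Mstar \<le> b"
    by (auto simp: feasible1_def)
  define f where "f p = revenue U E \<tau> Rset pv p (\<alpha> * p) (Mhat p (\<alpha> * p))" for p
  have rev: "revenue U E \<tau> Rset pv p q M = (p - q) * real (infl U E \<tau> Rset pv p M)" for p q M
    by (simp add: revenue_def algebra_simps)
  define c where "c = pstar - \<alpha> * pstar"
  have c0: "0 \<le> c" using ps alpha by (simp add: c_def mult_left_le_one_le)
  have finM: "finite Mstar"
  proof (rule finite_subset[of _ "{1..U}"])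
    show "Mstar \<subseteq> {1..U}" using Ms Sup_sub by (auto simp: Stil_def)
  qed simp
  define G where "G M = revenue U E \<tau> Rset pv pstar (\<alpha> * pstar) M" for M
  have G_eq: "G M = c * real (infl U E \<tau> Rset pv pstar M)" for M
    by (simp add: G_def rev c_def)
  have claim1: "f pstar \<ge> (1 - 1 / exp 1) * revenue U E \<tau> Rset pv pstar qstar Mstar"
  proof -
    have Rs: "revenue U E \<tau> Rset pv pstar qstar Mstar = G Mstar" by (simp add: G_def qs)
    have fG: "f pstar = G (Mhat pstar (\<alpha> * pstar))" by (simp add: f_def G_def)
    from greedy ps have "greedy_output U E \<tau> Rset Sset pv qv b pstar (\<alpha> * pstar) (Mhat pstar (\<alpha> * pstar))"
      by blast
    then consider (e) "Stil Sset qv (\<alpha> * pstar) = {}" "Mhat pstar (\<alpha> * pstar) = {}"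
      | (l) us where "length us = b" "Mhat pstar (\<alpha> * pstar) = set us"
        "\<forall>t<b. us ! t \<in> Stil Sset qv (\<alpha> * pstar) \<and>
           (\<forall>u\<in>Stil Sset qv (\<alpha> * pstar).
              G (insert u (set (take t us))) - G (set (take t us))
              \<le> G (insert (us ! t) (set (take t us))) - G (set (take t us)))"
      unfolding greedy_output_def G_def by blast
    then show ?thesis
    proof cases
      case e
      then have "Mstar = {}" using Ms qs by auto
      then show ?thesis using e unfolding Rs fG by (simp add: G_eq infl_empty)
    next
      case l
      have "G (set us) \<ge> (1 - 1 / exp 1) * G Mstar"
      proof (rule greedy_bound[where C = "Stil Sset qv (\<alpha> * pstar)" and b = b])
        show "G A \<le> G B" if "A \<subseteq> B" for A B
          unfolding G_eq using c0 infl_mono[OF that] by (rule mult_left_mono[rotated])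
        show "G Mstar \<le> G S + (\<Sum>z\<in>Mstar. G (insert z S) - G S)" for S
        proof -
          have "G Mstar \<le> c * (real (infl U E \<tau> Rset pv pstar S)
            + (\<Sum>z\<in>Mstar. real (infl U E \<tau> Rset pv pstar (insert z S)) - real (infl U E \<tau> Rset pv pstar S)))"
            unfolding G_eq using c0 infl_sub[OF finM] by (rule mult_left_mono[rotated])
          also have "\<dots> = G S + (\<Sum>z\<in>Mstar. G (insert z S) - G S)"
            unfolding G_eq by (simp add: algebra_simps sum_distrib_left sum_subtractf)
          finally show ?thesis .
        qed
        show "G {} = 0" by (simp add: G_eq infl_empty)
      qed (use finM cM Ms qs b_pos l in auto)
      then show ?thesis using l by (simp add: Rs fG)
    qed
  qed
  define k where "k = nat \<lfloor>pstar / \<epsilon>\<rfloor>"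
  define g where "g = real k * \<epsilon>"
  have pe0: "0 \<le> pstar / \<epsilon>" using ps eps by simp
  have k1: "real k \<le> pstar / \<epsilon>" using pe0 by (simp add: k_def)
  have k2: "pstar / \<epsilon> < real k + 1" using pe0 by (simp add: k_def)
  have g1: "g \<le> pstar" using k1 eps by (simp add: g_def field_simps)
  have g2: "pstar - g < \<epsilon>" using k2 eps by (simp add: g_def field_simps)
  have g0: "0 \<le> g" using eps by (simp add: g_def)
  have "pstar / \<epsilon> \<le> 1 / \<epsilon>" using ps eps by (simp add: divide_right_mono)
  then have "k \<le> nat \<lfloor>1 / \<epsilon>\<rfloor>" unfolding k_def by (intro nat_mono floor_mono)
  then have g_grid: "g \<in> grid \<epsilon>" by (auto simp: grid_def g_def)
  have g01: "g \<in> {0..1}" using g0 g1 ps by auto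
  have b0: "0 \<le> \<beta>" using lip by (rule lipschitz_on_nonneg)
  have "dist (f g) (f pstar) \<le> \<beta> * dist g pstar"
    using lipschitz_onD[OF lip g01 ps] by (simp add: f_def)
  also have "\<dots> \<le> \<beta> * \<epsilon>" using g1 g2 b0 by (intro mult_left_mono) (auto simp: dist_real_def)
  finally have "f g \<ge> f pstar - \<beta> * \<epsilon>" by (simp add: dist_real_def abs_le_iff)
  moreover have "f g \<le> f pDS" using pDS_max g_grid by (simp add: f_def)
  ultimately show ?thesis using claim1 by (simp add: f_def)
qed

end
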